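(* Let $n\ge1$ and let $\mathbf{R}$ be a subalgebra of $\mathbf{P\L}_n\times\mathbf{P\L}_n$. Suppose $\mathbf{R}$ is not of the form $\mathbf{S}_1\times\mathbf{S}_2$ with $\mathbf{S}_1,\mathbf{S}_2$ subalgebras of $\mathbf{P\L}_n$. Then one of the following holds: - $\mathbf{R}\subseteq{\le}=\{(x,y):x\le y\}$; - $\mathbf{R}\subseteq{\ge}=\{(x,y):x\ge y\}$.
   Context: For $n\ge 1$, the algebra $\mathbf{P\L}_n=\langle\{0,\tfrac1n,\dots,\tfrac{n-1}{n},1\},\wedge,\vee,\odot,\oplus,0,1\rangle$ has $\wedge=\min$, $\vee=\max$, $x\odot y=\max\{0,x+y-1\}$ and $x\oplus y=\min\{1,x+y\}$. The order $\le$ is the usual numerical order. Binary relations on $\mathbf{P\L}_n$ are identified with subsets of $\mathbf{P\L}_n\times\mathbf{P\L}_n$, and operations on $\mathbf{P\L}_n\times\mathbf{P\L}_n$ are computed componentwise. *)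

theory Defs
  imports Complex_Main
begin

definition PL :: "nat \<Rightarrow> rat set" where
  "PL n = {of_nat k / of_nat n | k. k \<le> n}"

definition luk_conj :: "rat \<Rightarrow> rat \<Rightarrow> rat" where
  "luk_conj x y = max 0 (x + y - 1)"

definition luk_disj :: "rat \<Rightarrow> rat \<Rightarrow> rat" where
  "luk_disj x y = min 1 (x + y)"

definition is_subalg :: "nat \<Rightarrow> rat set \<Rightarrow> bool" where
  "is_subalg n S \<longleftrightarrow> S \<subseteq> PL n \<and> 0 \<in> S \<and> 1 \<in> S \<and>
     (\<forall>x\<in>S. \<forall>y\<in>S. min x y \<in> S \<and> max x y \<in> S \<and> luk_conj x y \<in> S \<and> luk_disj x y \<in> S)"

definition is_subalg2 :: "nat \<Rightarrow> (rat \<times> rat) set \<Rightarrow> bool" where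
  "is_subalg2 n R \<longleftrightarrow> R \<subseteq> PL n \<times> PL n \<and> (0, 0) \<in> R \<and> (1, 1) \<in> R \<and>
     (\<forall>(x1, x2)\<in>R. \<forall>(y1, y2)\<in>R.
        (min x1 y1, min x2 y2) \<in> R \<and> (max x1 y1, max x2 y2) \<in> R \<and>
        (luk_conj x1 y1, luk_conj x2 y2) \<in> R \<and> (luk_disj x1 y1, luk_disj x2 y2) \<in> R)"

end

theory Submission imports Defs begin
definition clo :: "(rat \<times> rat) set \<Rightarrow> bool" where
  "clo R \<longleftrightarrow> (\<forall>(x1, x2)\<in>R. \<forall>(y1, y2)\<in>R.
        (min x1 y1, min x2 y2) \<in> R \<and> (max x1 y1, max x2 y2) \<in> R \<and>
        (luk_conj x1 y1, luk_conj x2 y2) \<in> R \<and> (luk_disj x1 y1, luk_disj x2 y2) \<in> R)"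

lemma cloD: "clo R \<Longrightarrow> (x1,x2) \<in> R \<Longrightarrow> (y1,y2) \<in> R \<Longrightarrow>
        (min x1 y1, min x2 y2) \<in> R \<and> (max x1 y1, max x2 y2) \<in> R \<and>
        (luk_conj x1 y1, luk_conj x2 y2) \<in> R \<and> (luk_disj x1 y1, luk_disj x2 y2) \<in> R"
  unfolding clo_def by (simp add: Ball_def)

lemma cloI: "(\<And>x1 x2 y1 y2. (x1,x2) \<in> R \<Longrightarrow> (y1,y2) \<in> R \<Longrightarrow>
        (min x1 y1, min x2 y2) \<in> R \<and> (max x1 y1, max x2 y2) \<in> R \<and>
        (luk_conj x1 y1, luk_conj x2 y2) \<in> R \<and> (luk_disj x1 y1, luk_disj x2 y2) \<in> R) \<Longrightarrow> clo R"
  unfolding clo_def by (simp add: Ball_def)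

lemma clo_d: "clo R \<Longrightarrow> (a,b) \<in> R \<Longrightarrow> (min 1 (2*a), min 1 (2*b)) \<in> R"
proof -
  assume "clo R" "(a,b) \<in> R"
  then have "(luk_disj a a, luk_disj b b) \<in> R" using cloD by blast
  moreover have "luk_disj a a = min 1 (2*a)" "luk_disj b b = min 1 (2*b)" by (simp_all add: luk_disj_def)
  ultimately show ?thesis by simp
qed

lemma clo_s: "clo R \<Longrightarrow> (a,b) \<in> R \<Longrightarrow> (max 0 (2*a-1), max 0 (2*b-1)) \<in> R"
proof -
  assume "clo R" "(a,b) \<in> R"
  then have "(luk_conj a a, luk_conj b b) \<in> R" using cloD by blast
  moreover have "luk_conj a a = max 0 (2*a-1)" "luk_conj b b = max 0 (2*b-1)" by (simp_all add: luk_conj_def)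
  ultimately show ?thesis by simp
qed

lemma clo_swap: "clo R \<Longrightarrow> clo (prod.swap ` R)"
proof (rule cloI)
  fix x1 x2 y1 y2 assume c: "clo R" and "(x1, x2) \<in> prod.swap ` R" "(y1, y2) \<in> prod.swap ` R"
  then have m: "(x2,x1) \<in> R" "(y2,y1) \<in> R" by auto
  from cloD[OF c m] show "(min x1 y1, min x2 y2) \<in> prod.swap ` R \<and> (max x1 y1, max x2 y2) \<in> prod.swap ` R \<and>
        (luk_conj x1 y1, luk_conj x2 y2) \<in> prod.swap ` R \<and> (luk_disj x1 y1, luk_disj x2 y2) \<in> prod.swap ` R"
    by (simp only: pair_in_swap_image)
qed
lemma down_k:
  assumes "clo R"
  shows "\<forall>x. 0 \<le> x \<and> x < 1 \<and> 1 \<le> 2^k * (1 - x) \<and> (x,1) \<in> R \<longrightarrow> (0,1) \<in> R"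
proof (induction k)
  case 0
  then show ?case by auto
next
  case (Suc k)
  show ?case
  proof (intro allI impI)
    fix x :: rat assume h: "0 \<le> x \<and> x < 1 \<and> 1 \<le> 2^Suc k * (1 - x) \<and> (x,1) \<in> R"
    define x' where "x' = max 0 (2*x-1)"
    have m: "(x', 1) \<in> R" using clo_s[OF assms, of x 1] h by (simp add: x'_def)
    have p: "(1::rat) \<le> 2^k" by simp
    have "1 \<le> 2^k * (1 - x')"
    proof (cases "2*x - 1 \<le> 0")
      case True then show ?thesis using p by (simp add: x'_def)
    next
      case False
      then have "x' = 2*x-1" by (simp add: x'_def)
      then have e: "1 - x' = 2 * (1 - x)" by simp
      have "2^k * (1 - x') = 2^k * (2 * (1 - x))" by (simp only: e)
      also have "\<dots> = 2^Suc k * (1 - x)" by (simp only: power_Suc mult.assoc mult.commute mult.left_commute)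
      finally have eq: "2^k * (1 - x') = 2^Suc k * (1 - x)" .
      have hh: "1 \<le> 2^Suc k * (1 - x)" using h by blast
      show ?thesis by (subst eq) (rule hh)
    qed
    moreover have "0 \<le> x'" "x' < 1" using h by (auto simp: x'_def)
    ultimately show "(0,1) \<in> R" using Suc.IH m by blast
  qed
qed

lemma down:
  assumes "clo R" "0 \<le> x" "x < 1" "(x,1) \<in> R"
  shows "(0,1) \<in> R"
proof -
  obtain k where k: "1 < of_nat k * (1 - x)" using ex_less_of_nat_mult[of "1-x" 1] assms by auto
  have "of_nat k * (1 - x) \<le> 2^k * (1 - x)"
    using assms(3) by (intro mult_right_mono) (simp_all add: less_imp_le)
  with k have "1 \<le> 2^k * (1 - x)" by simp
  then show ?thesis using down_k[OF assms(1), of k] assms by blast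
qed

lemma sep_k:
  assumes "clo R"
  shows "\<forall>a b. 0 \<le> a \<and> a < b \<and> b \<le> 1 \<and> 1 \<le> 2^k * (b - a) \<and> (a,b) \<in> R \<longrightarrow> (0,1) \<in> R"
proof (induction k)
  case 0
  show ?case
  proof (intro allI impI)
    fix a b :: rat assume h: "0 \<le> a \<and> a < b \<and> b \<le> 1 \<and> 1 \<le> 2^0 * (b - a) \<and> (a,b) \<in> R"
    then have "a = 0" "b = 1" by auto
    then show "(0,1) \<in> R" using h by simp
  qed
next
  case (Suc k)
  show ?case
  proof (intro allI impI)
    fix a b :: rat assume h: "0 \<le> a \<and> a < b \<and> b \<le> 1 \<and> 1 \<le> 2^Suc k * (b - a) \<and> (a,b) \<in> R"
    consider "b \<le> 1/2" | "1/2 \<le> a" | "a < 1/2" "1/2 < b" by linarith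
    then show "(0,1) \<in> R"
    proof cases
      case 1
      have m: "(2*a, 2*b) \<in> R" using clo_d[OF assms, of a b] h 1 by simp
      have eq: "2^k * (2*b - 2*a) = 2^Suc k * (b - a)" by (simp add: algebra_simps)
      have hh: "1 \<le> 2^Suc k * (b - a)" using h by blast
      have "1 \<le> 2^k * (2*b - 2*a)" by (subst eq) (rule hh)
      then show ?thesis using Suc.IH[rule_format, of "2*a" "2*b"] m h 1 by simp
    next
      case 2
      have m: "(2*a-1, 2*b-1) \<in> R" using clo_s[OF assms, of a b] h 2 by simp
      have eq: "2^k * ((2*b-1) - (2*a-1)) = 2^Suc k * (b - a)" by (simp add: algebra_simps)
      have hh: "1 \<le> 2^Suc k * (b - a)" using h by blast
      have "1 \<le> 2^k * ((2*b-1) - (2*a-1))" by (subst eq) (rule hh)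
      then show ?thesis using Suc.IH[rule_format, of "2*a-1" "2*b-1"] m h 2 by simp
    next
      case 3
      have m: "(2*a, 1) \<in> R" using clo_d[OF assms, of a b] h 3 by simp
      show ?thesis using down[OF assms _ _ m] h 3 by simp
    qed
  qed
qed

lemma sep:
  assumes "clo R" "0 \<le> a" "a < b" "b \<le> 1" "(a,b) \<in> R"
  shows "(0,1) \<in> R"
proof -
  obtain k where k: "1 < of_nat k * (b - a)" using ex_less_of_nat_mult[of "b-a" 1] assms by auto
  have "of_nat k * (b - a) \<le> 2^k * (b - a)"
    using assms(3) by (intro mult_right_mono) (simp_all add: less_imp_le)
  with k have "1 \<le> 2^k * (b - a)" by simp
  then show ?thesis using sep_k[OF assms(1), of k] assms by blast
qed

lemma PL_bounds: "n \<ge> 1 \<Longrightarrow> x \<in> PL n \<Longrightarrow> 0 \<le> x \<and> x \<le> 1"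
  unfolding PL_def by (auto simp: divide_le_eq_1)

theorem lemma3p8:
  fixes n :: nat and R :: "(rat \<times> rat) set"
  assumes "n \<ge> 1"
    and "is_subalg2 n R"
    and "\<not> (\<exists>S1 S2. is_subalg n S1 \<and> is_subalg n S2 \<and> R = S1 \<times> S2)"
  shows "R \<subseteq> {(x, y). x \<le> y} \<or> R \<subseteq> {(x, y). x \<ge> y}"
proof (rule ccontr)
  assume "\<not> ?thesis"
  then have n1: "\<not> R \<subseteq> {(x, y). x \<le> y}" and n2: "\<not> R \<subseteq> {(x, y). x \<ge> y}" by auto
  from n1 obtain a b where ab: "(a,b) \<in> R" "b < a" by (fastforce simp: subset_iff)
  from n2 obtain c d where cd: "(c,d) \<in> R" "c < d" by (fastforce simp: subset_iff)
  have cl: "clo R" using assms(2) unfolding is_subalg2_def clo_def by blast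
  have sub: "R \<subseteq> PL n \<times> PL n" using assms(2) unfolding is_subalg2_def by blast
  have bnd: "\<And>x y. (x,y) \<in> R \<Longrightarrow> 0 \<le> x \<and> x \<le> 1 \<and> 0 \<le> y \<and> y \<le> 1"
    using sub PL_bounds[OF assms(1)] by blast
  have p01: "(0,1) \<in> R" using sep[OF cl _ cd(2) _ cd(1)] bnd[OF cd(1)] by simp
  have "(b,a) \<in> prod.swap ` R" using ab by force
  then have "(0,1) \<in> prod.swap ` R" using sep[OF clo_swap[OF cl] _ ab(2)] bnd[OF ab(1)] by simp
  then have p10: "(1,0) \<in> R" by force
  let ?S1 = "fst ` R" and ?S2 = "snd ` R"
  have c1: "\<forall>x\<in>?S1. \<forall>y\<in>?S1. min x y \<in> ?S1 \<and> max x y \<in> ?S1 \<and> luk_conj x y \<in> ?S1 \<and> luk_disj x y \<in> ?S1"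
  proof (intro ballI)
    fix x y assume "x \<in> ?S1" "y \<in> ?S1"
    then obtain x2 y2 where q: "(x,x2) \<in> R" "(y,y2) \<in> R" by force
    have "(min x y, min x2 y2) \<in> R \<and> (max x y, max x2 y2) \<in> R \<and>
        (luk_conj x y, luk_conj x2 y2) \<in> R \<and> (luk_disj x y, luk_disj x2 y2) \<in> R"
      using cloD[OF cl q] by (simp add: min.commute max.commute)
    then show "min x y \<in> ?S1 \<and> max x y \<in> ?S1 \<and> luk_conj x y \<in> ?S1 \<and> luk_disj x y \<in> ?S1"
      by force
  qed
  have s1: "is_subalg n ?S1"
    unfolding is_subalg_def using sub p01 p10 c1 by force
  have c2: "\<forall>x\<in>?S2. \<forall>y\<in>?S2. min x y \<in> ?S2 \<and> max x y \<in> ?S2 \<and> luk_conj x y \<in> ?S2 \<and> luk_disj x y \<in> ?S2"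
  proof (intro ballI)
    fix x y assume "x \<in> ?S2" "y \<in> ?S2"
    then obtain x2 y2 where q: "(x2,x) \<in> R" "(y2,y) \<in> R" by force
    have "(min x2 y2, min x y) \<in> R \<and> (max x2 y2, max x y) \<in> R \<and>
        (luk_conj x2 y2, luk_conj x y) \<in> R \<and> (luk_disj x2 y2, luk_disj x y) \<in> R"
      using cloD[OF cl q] by (simp add: min.commute max.commute)
    then show "min x y \<in> ?S2 \<and> max x y \<in> ?S2 \<and> luk_conj x y \<in> ?S2 \<and> luk_disj x y \<in> ?S2"
      by force
  qed
  have s2: "is_subalg n ?S2"
    unfolding is_subalg_def using sub p01 p10 c2 by force
  have "R = ?S1 \<times> ?S2"
  proof
    show "R \<subseteq> ?S1 \<times> ?S2" by force
  next
    show "?S1 \<times> ?S2 \<subseteq> R"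
    proof
      fix p assume "p \<in> ?S1 \<times> ?S2"
      then obtain x y u v where xy: "(x,y) \<in> R" and uv: "(u,v) \<in> R" and p: "p = (x,v)" by force
      have m1: "(min x 1, min y 0) \<in> R" using cloD[OF cl xy p10] by simp
      have m2: "(min u 0, min v 1) \<in> R" using cloD[OF cl uv p01] by simp
      have e1: "(min x 1, min y 0) = (x, 0)" using bnd[OF xy] by simp
      have e2: "(min u 0, min v 1) = (0, v)" using bnd[OF uv] by simp
      have "(max x 0, max 0 v) \<in> R" using cloD[OF cl m1[unfolded e1] m2[unfolded e2]] by simp
      then show "p \<in> R" using bnd[OF xy] bnd[OF uv] p by simp
    qed
  qed
  then show False using assms(3) s1 s2 by blast
qed

end
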